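(* Let $\omega=\{\omega_k\}_{k\in\mathbb{N}}$ be a sequence of positive real numbers with $\omega_0=1$, such that there is a constant $C>1$ with $\omega_k\le Ck^2$ and $\omega_k\le\omega_{k+1}$ for all $k\in\mathbb{N}$. Let $H^2_\omega$ be the space of holomorphic functions $f(z)=\sum_{k\ge0}\hat f(k)z^k$ on the unit disc $\mathbb{D}$ with finite norm $\|f\|_\omega=\left(\sum_{k\ge0}|\hat f(k)|^2\omega_k\right)^{1/2}$. Let $f\in H^2_\omega$. Consider the conditions: (a) $\|f\|_\omega=1$ and for every integer $k\ge1$ and every $\lambda\in\mathbb{C}$, $$\|f\,g_{k,\lambda}\|_\omega^2\le \omega_k+|\lambda|^2,\qquad\text{where } g_{k,\lambda}(z)=z^k+\lambda;$$ (b) $\|f\|_\omega=\|f\|_{M}=1$, where $\|f\|_M$ denotes the multiplier norm of $f$ on $H^2_\omega$. Then (b) implies (a), and (a) implies that $f$ is $H^2_\omega$-inner, i.e. $\langle z^j f,f\rangle_\omega=\delta_{0,j}$ for all $j\in\mathbb{N}$.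
   Context: $\mathbb{N}=\{0,1,2,\dots\}$. The inner product on $H^2_\omega$ is $\langle f,g\rangle_\omega=\sum_{k\ge0}\hat f(k)\overline{\hat g(k)}\,\omega_k$, and $\delta_{0,j}$ is the Kronecker delta. A holomorphic function $h$ on $\mathbb{D}$ is a multiplier of $H^2_\omega$ if $g\mapsto hg$ is a bounded operator on $H^2_\omega$; its multiplier norm $\|h\|_M$ is the operator norm of this multiplication operator (condition (b) in particular requires $f$ to be a multiplier). Such spaces $H^2_\omega$ coincide with Dirichlet-type spaces $D_\mu$ with radial measure $\mu$, whose norm is $\|f\|_{H^2}^2+\int_{\mathbb{D}}|f'|^2\,d\mu$. *)

theory Defs
  imports "HOL-Analysis.Analysis"
begin

definition tcoeff :: "(complex \<Rightarrow> complex) \<Rightarrow> nat \<Rightarrow> complex" where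
  "tcoeff f k = (deriv ^^ k) f 0 / of_nat (fact k)"

definition in_H2w :: "(nat \<Rightarrow> real) \<Rightarrow> (complex \<Rightarrow> complex) \<Rightarrow> bool" where
  "in_H2w \<omega> f \<longleftrightarrow> f holomorphic_on ball 0 1 \<and>
     summable (\<lambda>k. (cmod (tcoeff f k))^2 * \<omega> k)"

definition normw :: "(nat \<Rightarrow> real) \<Rightarrow> (complex \<Rightarrow> complex) \<Rightarrow> real" where
  "normw \<omega> f = sqrt (\<Sum>k. (cmod (tcoeff f k))^2 * \<omega> k)"

definition innerw :: "(nat \<Rightarrow> real) \<Rightarrow> (complex \<Rightarrow> complex) \<Rightarrow> (complex \<Rightarrow> complex) \<Rightarrow> complex" where
  "innerw \<omega> f g = (\<Sum>k. tcoeff f k * cnj (tcoeff g k) * complex_of_real (\<omega> k))"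

definition is_multiplier :: "(nat \<Rightarrow> real) \<Rightarrow> (complex \<Rightarrow> complex) \<Rightarrow> bool" where
  "is_multiplier \<omega> h \<longleftrightarrow> h holomorphic_on ball 0 1 \<and>
     (\<exists>B. \<forall>g. in_H2w \<omega> g \<longrightarrow> in_H2w \<omega> (\<lambda>z. h z * g z) \<and>
                 normw \<omega> (\<lambda>z. h z * g z) \<le> B * normw \<omega> g)"

definition mult_norm :: "(nat \<Rightarrow> real) \<Rightarrow> (complex \<Rightarrow> complex) \<Rightarrow> real" where
  "mult_norm \<omega> h = (SUP g \<in> {g. in_H2w \<omega> g \<and> normw \<omega> g \<le> 1}. normw \<omega> (\<lambda>z. h z * g z))"

end

theory Submission
  imports Defs "HOL-Complex_Analysis.Complex_Analysis"
begin

lemma tcoeff_add: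
  assumes "f holomorphic_on ball 0 1" "g holomorphic_on ball 0 1"
  shows "tcoeff (\<lambda>z. f z + g z) n = tcoeff f n + tcoeff g n"
  unfolding tcoeff_def
  using higher_deriv_add[OF assms open_ball, of 0 n] by (simp add: add_divide_distrib)

lemma tcoeff_cmult:
  assumes "f holomorphic_on ball 0 1"
  shows "tcoeff (\<lambda>z. c * f z) n = c * tcoeff f n"
  unfolding tcoeff_def
  using higher_deriv_cmult[OF assms _ open_ball, of 0 n c] by simp

lemma tcoeff_pow: "tcoeff (\<lambda>z. z ^ k) n = (if n = k then 1 else 0)"
proof -
  have A: "(deriv ^^ n) (\<lambda>w. w ^ k) 0 = pochhammer (of_nat (Suc k - n)) n * (0::complex) ^ (k - n)"
    using higher_deriv_power[of n 0 k 0] by simp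
  have B: "pochhammer (of_nat (Suc k - n)) n * (0::complex) ^ (k - n) = (if n = k then fact k else 0)"
  proof (cases "n = k")
    case True then show ?thesis by (simp add: pochhammer_fact)
  next
    case False
    show ?thesis
    proof (cases "n < k")
      case True then show ?thesis by simp
    next
      case False2: False
      then have "Suc k - n = 0" using False by simp
      then show ?thesis using False False2 by (simp add: pochhammer_0_left)
    qed
  qed
  show ?thesis unfolding tcoeff_def A B by simp
qed

lemma tcoeff_const: "tcoeff (\<lambda>z. c) n = (if n = 0 then c else 0)"
  unfolding tcoeff_def by simp


lemma normw_nonneg:
  assumes "in_H2w \<omega> h" "\<And>n. \<omega> n \<ge> 0"
  shows "normw \<omega> h \<ge> 0"
  using assms unfolding in_H2w_def normw_def
  by (intro real_sqrt_ge_zero suminf_nonneg) auto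

lemma normw_sq:
  assumes "in_H2w \<omega> h" "\<And>n. \<omega> n \<ge> 0"
  shows "(normw \<omega> h)^2 = (\<Sum>k. (cmod (tcoeff h k))^2 * \<omega> k)"
  using assms unfolding in_H2w_def normw_def
  by (intro real_sqrt_pow2 suminf_nonneg) auto

lemma in_H2w_cmult:
  assumes "in_H2w \<omega> h"
  shows "in_H2w \<omega> (\<lambda>z. a * h z)"
proof -
  have hol: "h holomorphic_on ball 0 1" using assms unfolding in_H2w_def by auto
  have "summable (\<lambda>k. (cmod a)^2 * ((cmod (tcoeff h k))^2 * \<omega> k))"
    using assms unfolding in_H2w_def by (intro summable_mult) auto
  then show ?thesis using hol unfolding in_H2w_def
    by (simp add: tcoeff_cmult[OF hol] norm_mult power_mult_distrib mult.assoc holomorphic_on_mult)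
qed

lemma normw_cmult:
  assumes "in_H2w \<omega> h"
  shows "normw \<omega> (\<lambda>z. a * h z) = cmod a * normw \<omega> h"
proof -
  have hol: "h holomorphic_on ball 0 1" using assms unfolding in_H2w_def by auto
  have sm: "summable (\<lambda>k. (cmod (tcoeff h k))^2 * \<omega> k)" using assms unfolding in_H2w_def by auto
  have "normw \<omega> (\<lambda>z. a * h z) = sqrt (\<Sum>k. (cmod a)^2 * ((cmod (tcoeff h k))^2 * \<omega> k))"
    unfolding normw_def by (simp add: tcoeff_cmult[OF hol] norm_mult power_mult_distrib mult.assoc)
  also have "\<dots> = sqrt ((cmod a)^2 * (\<Sum>k. (cmod (tcoeff h k))^2 * \<omega> k))"
    by (simp add: suminf_mult[OF sm])
  also have "\<dots> = cmod a * normw \<omega> h"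
    unfolding normw_def by (simp add: real_sqrt_mult)
  finally show ?thesis .
qed

lemma poly_H2w:
  assumes "k \<ge> 1" "\<omega> 0 = 1" "\<And>n. \<omega> n \<ge> 0"
  shows "in_H2w \<omega> (\<lambda>z. z ^ k + c) \<and> (normw \<omega> (\<lambda>z. z ^ k + c))^2 = \<omega> k + (cmod c)^2"
proof -
  have tc: "tcoeff (\<lambda>z. z ^ k + c) n = (if n = k then 1 else 0) + (if n = 0 then c else 0)" for n
    by (subst tcoeff_add) (auto simp: tcoeff_pow tcoeff_const intro!: holomorphic_intros)
  define t where "t n = (cmod (tcoeff (\<lambda>z. z ^ k + c) n))^2 * \<omega> n" for n
  have "t sums (sum t {0, k})"
    by (rule sums_finite) (auto simp: t_def tc)
  moreover have "sum t {0, k} = \<omega> k + (cmod c)^2"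
    using assms by (simp add: t_def tc)
  ultimately have S: "t sums (\<omega> k + (cmod c)^2)" by simp
  have tt: "(\<lambda>n. (cmod (tcoeff (\<lambda>z. z ^ k + c) n))^2 * \<omega> n) = t"
    by (simp add: t_def fun_eq_iff)
  have "in_H2w \<omega> (\<lambda>z. z ^ k + c)"
    unfolding in_H2w_def tt using S sums_summable
    by (auto intro!: holomorphic_intros)
  moreover have "(normw \<omega> (\<lambda>z. z ^ k + c))^2 = \<omega> k + (cmod c)^2"
    unfolding normw_def tt sums_unique[OF S, symmetric]
    by (rule real_sqrt_pow2) (simp add: sums_unique[OF S, symmetric] add_nonneg_nonneg assms(3))
  ultimately show ?thesis by simp
qed


lemma mult_bound:
  assumes M: "is_multiplier \<omega> f" and MN: "mult_norm \<omega> f \<le> 1" and g: "in_H2w \<omega> g"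
    and w: "\<And>n. \<omega> n \<ge> 0"
  shows "in_H2w \<omega> (\<lambda>z. f z * g z) \<and> normw \<omega> (\<lambda>z. f z * g z) \<le> normw \<omega> g"
proof -
  obtain B where B: "\<And>g. in_H2w \<omega> g \<Longrightarrow> in_H2w \<omega> (\<lambda>z. f z * g z) \<and>
                 normw \<omega> (\<lambda>z. f z * g z) \<le> B * normw \<omega> g"
    using M unfolding is_multiplier_def by blast
  have fg: "in_H2w \<omega> (\<lambda>z. f z * g z)" using B g by blast
  have bdd: "bdd_above ((\<lambda>g. normw \<omega> (\<lambda>z. f z * g z)) ` {g. in_H2w \<omega> g \<and> normw \<omega> g \<le> 1})"
  proof (rule bdd_aboveI2)
    fix h assume h: "h \<in> {g. in_H2w \<omega> g \<and> normw \<omega> g \<le> 1}"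
    then have "normw \<omega> (\<lambda>z. f z * h z) \<le> B * normw \<omega> h" using B by blast
    also have "\<dots> \<le> \<bar>B\<bar> * normw \<omega> h"
      using normw_nonneg[of \<omega> h] h w by (intro mult_right_mono) auto
    also have "\<dots> \<le> \<bar>B\<bar> * 1" using h by (intro mult_left_mono) auto
    finally show "normw \<omega> (\<lambda>z. f z * h z) \<le> \<bar>B\<bar>" by simp
  qed
  have "normw \<omega> (\<lambda>z. f z * g z) \<le> normw \<omega> g"
  proof (cases "normw \<omega> g = 0")
    case True
    then show ?thesis using B[OF g] by simp
  next
    case False
    define s where "s = normw \<omega> g"
    have s: "s > 0" using False normw_nonneg[OF g w] s_def by simp
    define h where "h = (\<lambda>z. complex_of_real (1/s) * g z)"
    have h: "in_H2w \<omega> h" unfolding h_def by (rule in_H2w_cmult[OF g])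
    have nh: "normw \<omega> h = 1" unfolding h_def normw_cmult[OF g] using s s_def by (simp add: norm_divide)
    have "normw \<omega> (\<lambda>z. f z * h z) \<le> mult_norm \<omega> f"
      unfolding mult_norm_def using h nh by (intro cSUP_upper[OF _ bdd]) auto
    then have fh: "normw \<omega> (\<lambda>z. f z * h z) \<le> 1" using MN by simp
    have fhH: "in_H2w \<omega> (\<lambda>z. f z * h z)" using B h by blast
    have "(\<lambda>z. f z * g z) = (\<lambda>z. complex_of_real s * (f z * h z))"
      using s by (auto simp: h_def fun_eq_iff)
    then have "normw \<omega> (\<lambda>z. f z * g z) = s * normw \<omega> (\<lambda>z. f z * h z)"
      using normw_cmult[OF fhH] s by simp
    also have "\<dots> \<le> s" using fh s by (simp add: mult_left_le)
    finally show ?thesis using s_def by simp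
  qed
  with fg show ?thesis by blast
qed

lemma expand:
  fixes a b :: "nat \<Rightarrow> complex"
  assumes w: "\<And>n. \<omega> n \<ge> 0"
    and sa: "summable (\<lambda>n. (cmod (a n))^2 * \<omega> n)"
    and sb: "summable (\<lambda>n. (cmod (b n))^2 * \<omega> n)"
  shows "(\<Sum>n. (cmod (a n + c * b n))^2 * \<omega> n) =
     (\<Sum>n. (cmod (a n))^2 * \<omega> n) + (cmod c)^2 * (\<Sum>n. (cmod (b n))^2 * \<omega> n)
       + 2 * Re (cnj c * (\<Sum>n. a n * cnj (b n) * complex_of_real (\<omega> n)))"
proof -
  define X where "X n = a n * cnj (b n) * complex_of_real (\<omega> n)" for n
  have nX: "norm (X n) \<le> ((cmod (a n))^2 * \<omega> n + (cmod (b n))^2 * \<omega> n) / 2" for n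
  proof -
    have "norm (X n) = cmod (a n) * cmod (b n) * \<omega> n"
      using w[of n] by (simp add: X_def norm_mult)
    also have "\<dots> \<le> ((cmod (a n))^2 + (cmod (b n))^2) / 2 * \<omega> n"
    proof (intro mult_right_mono)
      have "0 \<le> (cmod (a n) - cmod (b n))^2" by simp
      then show "cmod (a n) * cmod (b n) \<le> ((cmod (a n))^2 + (cmod (b n))^2) / 2"
        by (simp add: power2_diff field_simps)
    qed (use w[of n] in auto)
    finally show ?thesis by (simp add: field_simps)
  qed
  have sX: "summable X"
    by (rule summable_comparison_test[OF _ summable_divide[OF summable_add[OF sa sb], of 2]])
       (use nX in blast)
  have s1: "(\<lambda>n. (cmod (a n))^2 * \<omega> n) sums (\<Sum>n. (cmod (a n))^2 * \<omega> n)"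
    using sa by (rule summable_sums)
  have s2: "(\<lambda>n. (cmod c)^2 * ((cmod (b n))^2 * \<omega> n)) sums ((cmod c)^2 * (\<Sum>n. (cmod (b n))^2 * \<omega> n))"
    using sb by (intro sums_mult summable_sums)
  have s3: "(\<lambda>n. 2 * Re (cnj c * X n)) sums (2 * Re (cnj c * suminf X))"
    using sX by (intro sums_mult sums_Re summable_sums sums_mult summable_sums) 
  have pt: "(cmod (a n + c * b n))^2 * \<omega> n =
      (cmod (a n))^2 * \<omega> n + (cmod c)^2 * ((cmod (b n))^2 * \<omega> n) + 2 * Re (cnj c * X n)" for n
    unfolding cmod_power2 by (simp add: X_def power2_eq_square algebra_simps)
  have "(\<lambda>n. (cmod (a n + c * b n))^2 * \<omega> n) sums
     ((\<Sum>n. (cmod (a n))^2 * \<omega> n) + (cmod c)^2 * (\<Sum>n. (cmod (b n))^2 * \<omega> n) + 2 * Re (cnj c * suminf X))"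
    unfolding pt by (intro sums_add s1 s2 s3)
  then show ?thesis unfolding X_def by (simp add: sums_unique[symmetric])
qed

theorem theorem2p1:
  fixes \<omega> :: "nat \<Rightarrow> real" and C :: real and f :: "complex \<Rightarrow> complex"
  assumes pos: "\<And>k. \<omega> k > 0"
    and w0: "\<omega> 0 = 1"
    and C: "C > 1"
    and growth: "\<And>k. k \<ge> 1 \<Longrightarrow> \<omega> k \<le> C * (real k)^2"
    and mono: "\<And>k. \<omega> k \<le> \<omega> (Suc k)"
    and f: "in_H2w \<omega> f"
  shows "((is_multiplier \<omega> f \<and> normw \<omega> f = 1 \<and> mult_norm \<omega> f = 1) \<longrightarrow>
           (normw \<omega> f = 1 \<and>
            (\<forall>k::nat. k \<ge> 1 \<longrightarrow> (\<forall>c::complex.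
               in_H2w \<omega> (\<lambda>z. f z * (z ^ k + c)) \<and>
               (normw \<omega> (\<lambda>z. f z * (z ^ k + c)))^2 \<le> \<omega> k + (cmod c)^2))))
       \<and> ((normw \<omega> f = 1 \<and>
            (\<forall>k::nat. k \<ge> 1 \<longrightarrow> (\<forall>c::complex.
               in_H2w \<omega> (\<lambda>z. f z * (z ^ k + c)) \<and>
               (normw \<omega> (\<lambda>z. f z * (z ^ k + c)))^2 \<le> \<omega> k + (cmod c)^2)))
          \<longrightarrow> (\<forall>j::nat. innerw \<omega> (\<lambda>z. z ^ j * f z) f = (if j = 0 then 1 else 0)))"
  proof -
  have w: "\<And>n. \<omega> n \<ge> 0" using pos less_imp_le by blast
  have fhol: "f holomorphic_on ball 0 1" using f unfolding in_H2w_def by blast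
  have P1: "normw \<omega> f = 1 \<and>
            (\<forall>k::nat. k \<ge> 1 \<longrightarrow> (\<forall>c::complex.
               in_H2w \<omega> (\<lambda>z. f z * (z ^ k + c)) \<and>
               (normw \<omega> (\<lambda>z. f z * (z ^ k + c)))^2 \<le> \<omega> k + (cmod c)^2))"
    if M: "is_multiplier \<omega> f" and N: "normw \<omega> f = 1" and MN: "mult_norm \<omega> f = 1"
  proof -
    have "in_H2w \<omega> (\<lambda>z. f z * (z ^ k + c)) \<and>
               (normw \<omega> (\<lambda>z. f z * (z ^ k + c)))^2 \<le> \<omega> k + (cmod c)^2"
      if k: "k \<ge> 1" for k c
    proof -
      have g: "in_H2w \<omega> (\<lambda>z. z ^ k + c)" and ng: "(normw \<omega> (\<lambda>z. z ^ k + c))^2 = \<omega> k + (cmod c)^2"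
        using poly_H2w[of k \<omega> c] k w0 w by auto
      have mb: "in_H2w \<omega> (\<lambda>z. f z * (z ^ k + c)) \<and> normw \<omega> (\<lambda>z. f z * (z ^ k + c)) \<le> normw \<omega> (\<lambda>z. z ^ k + c)"
        using mult_bound[of \<omega> f "\<lambda>z. z ^ k + c"] M g w MN by simp
      have "(normw \<omega> (\<lambda>z. f z * (z ^ k + c)))^2 \<le> (normw \<omega> (\<lambda>z. z ^ k + c))^2"
        using mb normw_nonneg[of \<omega> "\<lambda>z. f z * (z ^ k + c)"] w by (intro power_mono) auto
      then show ?thesis using mb ng by simp
    qed
    then show ?thesis using N by blast
  qed
  have P2: "innerw \<omega> (\<lambda>z. z ^ j * f z) f = (if j = 0 then 1 else 0)"
    if N: "normw \<omega> f = 1" and H: "\<forall>k::nat. k \<ge> 1 \<longrightarrow> (\<forall>c::complex.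
               in_H2w \<omega> (\<lambda>z. f z * (z ^ k + c)) \<and>
               (normw \<omega> (\<lambda>z. f z * (z ^ k + c)))^2 \<le> \<omega> k + (cmod c)^2)" for j
  proof -
    have sb: "summable (\<lambda>n. (cmod (tcoeff f n))^2 * \<omega> n)" using f unfolding in_H2w_def by blast
    have S1: "(\<Sum>n. (cmod (tcoeff f n))^2 * \<omega> n) = 1"
      using normw_sq[OF f w] N by simp
    show ?thesis
    proof (cases "j = 0")
      case True
      have "innerw \<omega> (\<lambda>z. z ^ j * f z) f = (\<Sum>n. complex_of_real ((cmod (tcoeff f n))^2 * \<omega> n))"
        unfolding innerw_def True by (simp add: complex_norm_square[symmetric] mult.commute)
      also have "\<dots> = complex_of_real (\<Sum>n. (cmod (tcoeff f n))^2 * \<omega> n)"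
        by (rule suminf_of_real[OF sb, symmetric])
      finally show ?thesis using S1 True by simp
    next
      case False
      then have j: "j \<ge> 1" by simp
      have eq0: "(\<lambda>z. f z * (z ^ j + 0)) = (\<lambda>z. z ^ j * f z)" by (simp add: fun_eq_iff mult.commute)
      have zf: "in_H2w \<omega> (\<lambda>z. z ^ j * f z)" using H j eq0 by metis
      then have zfhol: "(\<lambda>z. z ^ j * f z) holomorphic_on ball 0 1" unfolding in_H2w_def by blast
      have sa: "summable (\<lambda>n. (cmod (tcoeff (\<lambda>z. z ^ j * f z) n))^2 * \<omega> n)"
        using zf unfolding in_H2w_def by blast
      define A where "A = (\<Sum>n. (cmod (tcoeff (\<lambda>z. z ^ j * f z) n))^2 * \<omega> n)"
      define I where "I = innerw \<omega> (\<lambda>z. z ^ j * f z) f"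
      have ineq: "2 * Re (cnj c * I) \<le> \<omega> j - A" for c
      proof -
        have fc: "(\<lambda>z. f z * (z ^ j + c)) = (\<lambda>z. z ^ j * f z + c * f z)"
          by (simp add: fun_eq_iff algebra_simps)
        have tc: "tcoeff (\<lambda>z. f z * (z ^ j + c)) n = tcoeff (\<lambda>z. z ^ j * f z) n + c * tcoeff f n" for n
          unfolding fc
          by (subst tcoeff_add) (auto simp: tcoeff_cmult[OF fhol] zfhol fhol intro!: holomorphic_intros)
        have hc: "in_H2w \<omega> (\<lambda>z. f z * (z ^ j + c))" and le: "(normw \<omega> (\<lambda>z. f z * (z ^ j + c)))^2 \<le> \<omega> j + (cmod c)^2"
          using H j by auto
        have "(normw \<omega> (\<lambda>z. f z * (z ^ j + c)))^2 = A + (cmod c)^2 * 1 + 2 * Re (cnj c * I)"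
          unfolding normw_sq[OF hc w] tc expand[OF w sa sb] A_def I_def innerw_def S1 ..
        then show ?thesis using le by simp
      qed
      have "I = 0"
      proof (rule ccontr)
        assume I0: "I \<noteq> 0"
        define t where "t = (\<bar>\<omega> j - A\<bar> + 1) / (cmod I)^2"
        have cI: "cnj I * I = complex_of_real ((cmod I)^2)"
          by (metis complex_norm_square mult.commute of_real_power)
        have "cnj (complex_of_real t * I) * I = complex_of_real (t * (cmod I)^2)"
          using cI by (simp add: mult.assoc)
        then have "Re (cnj (complex_of_real t * I) * I) = \<bar>\<omega> j - A\<bar> + 1"
          using I0 by (simp add: t_def)
        then show False using ineq[of "complex_of_real t * I"] by linarith
      qed
      then show ?thesis using False I_def by simp
    qed
  qed
  show ?thesis using P1 P2 by blast
qed

end
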